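(* Let $\mathbf{X}=(X_1,\dots,X_d)$ be a random vector with distribution function $F$ such that each $X_i$ is a.s. nonnegative with $0<E(X_i)<\infty$, and let $\|\mathbf{x}\|_F=E(\max(|x_0|,|x_1|X_1,\dots,|x_d|X_d))$ for $\mathbf{x}\in\mathbb{R}^{d+1}$. Then for any $x_1,\dots,x_d>0$, the right-derivative of $t\mapsto\|(t,1/x_1,\dots,1/x_d)\|_F$ at $t=1$ exists and equals $F(x_1,\dots,x_d)$. *)

theory Defs
  imports "HOL-Probability.Probability"
begin

text \<open>The random vector X = (X_1,...,X_d) is indexed by a finite type 'd
 (so d = CARD('d) >= 1).  Its distribution function is
 F(x) = P(X_i <= x_i for all i).\<close>

definition distr_fun :: "'a measure \<Rightarrow> ('d::finite \<Rightarrow> 'a \<Rightarrow> real) \<Rightarrow> ('d \<Rightarrow> real) \<Rightarrow> real" where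
  "distr_fun M X x = measure M {\<omega> \<in> space M. \<forall>i. X i \<omega> \<le> x i}"

definition D_norm :: "'a measure \<Rightarrow> ('d::finite \<Rightarrow> 'a \<Rightarrow> real) \<Rightarrow> real \<Rightarrow> ('d \<Rightarrow> real) \<Rightarrow> real" where
  "D_norm M X x0 x = integral\<^sup>L M (\<lambda>\<omega>. max \<bar>x0\<bar> (Max (range (\<lambda>i. \<bar>x i\<bar> * X i \<omega>))))"

end

theory Submission
  imports Defs
begin

lemma max_diff_bound:
  fixes t y :: real assumes "t > 1"
  shows "\<bar>(max t y - max 1 y) / (t - 1)\<bar> \<le> 1"
proof -
  have "0 \<le> max t y - max 1 y" "max t y - max 1 y \<le> t - 1" using assms by auto
  then show ?thesis using assms by (simp add: abs_le_iff divide_le_eq_1 )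
qed

lemma Max_abs_le_sum:
  fixes f :: "'d::finite \<Rightarrow> real"
  shows "\<bar>Max (range f)\<bar> \<le> (\<Sum>i\<in>UNIV. \<bar>f i\<bar>)"
proof -
  have "Max (range f) \<in> range f" by (rule Max_in) auto
  then obtain j where j: "Max (range f) = f j" by blast
  have "\<bar>f j\<bar> \<le> (\<Sum>i\<in>UNIV. \<bar>f i\<bar>)" by (rule member_le_sum) auto
  then show ?thesis using j by simp
qed

theorem corollary2p13:
  fixes M :: "'a measure" and X :: "'d::finite \<Rightarrow> 'a \<Rightarrow> real" and x :: "'d \<Rightarrow> real"
  assumes "prob_space M"
    and "\<And>i. X i \<in> borel_measurable M"
    and "\<And>i. AE \<omega> in M. X i \<omega> \<ge> 0"
    and "\<And>i. integrable M (X i)"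
    and "\<And>i. integral\<^sup>L M (X i) > 0"
    and "\<And>i. x i > 0"
  shows "((\<lambda>t. (D_norm M X t (\<lambda>i. 1 / x i) - D_norm M X 1 (\<lambda>i. 1 / x i)) / (t - 1))
            \<longlongrightarrow> distr_fun M X x) (at_right 1)"
proof -
  interpret prob_space M by fact
  define Y where "Y \<omega> = Max (range (\<lambda>i. \<bar>1 / x i\<bar> * X i \<omega>))" for \<omega>
  have Ymeas[measurable]: "Y \<in> borel_measurable M"
    unfolding Y_def using assms(2) by (intro borel_measurable_Max) auto
  have Yint: "integrable M Y"
  proof (rule Bochner_Integration.integrable_bound[OF _ Ymeas])
    show "integrable M (\<lambda>\<omega>. \<Sum>i\<in>UNIV. \<bar>\<bar>1 / x i\<bar> * X i \<omega>\<bar>)"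
      using assms(4) by (intro Bochner_Integration.integrable_sum integrable_abs integrable_mult_right) auto
    show "AE \<omega> in M. norm (Y \<omega>) \<le> norm (\<Sum>i\<in>UNIV. \<bar>\<bar>1 / x i\<bar> * X i \<omega>\<bar>)"
    proof (rule AE_I2)
      fix \<omega>
      have "norm (Y \<omega>) \<le> (\<Sum>i\<in>UNIV. \<bar>\<bar>1 / x i\<bar> * X i \<omega>\<bar>)"
        unfolding Y_def real_norm_def by (rule Max_abs_le_sum)
      also have "\<dots> \<le> norm (\<Sum>i\<in>UNIV. \<bar>\<bar>1 / x i\<bar> * X i \<omega>\<bar>)" by simp
      finally show "norm (Y \<omega>) \<le> norm (\<Sum>i\<in>UNIV. \<bar>\<bar>1 / x i\<bar> * X i \<omega>\<bar>)" .
    qed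
  qed
  have Mint: "integrable M (\<lambda>\<omega>. max c (Y \<omega>))" for c :: real
    using Yint by (intro integrable_max) auto
  define A where "A = {\<omega> \<in> space M. \<forall>i. X i \<omega> \<le> x i}"
  have A_sets[measurable]: "A \<in> sets M" unfolding A_def using assms(2) by measurable
  have YA: "Y \<omega> \<le> 1 \<longleftrightarrow> (\<forall>i. X i \<omega> \<le> x i)" for \<omega>
  proof -
    have "Y \<omega> \<le> 1 \<longleftrightarrow> (\<forall>i. \<bar>1 / x i\<bar> * X i \<omega> \<le> 1)"
      unfolding Y_def by (subst Max_le_iff) auto
    also have "\<dots> \<longleftrightarrow> (\<forall>i. X i \<omega> \<le> x i)"
    proof -
      have "\<bar>1 / x i\<bar> * X i \<omega> \<le> 1 \<longleftrightarrow> X i \<omega> \<le> x i" for i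
        using assms(6)[of i] by (simp add: field_simps)
      then show ?thesis by simp
    qed
    finally show ?thesis .
  qed
  define g where "g t \<omega> = (max t (Y \<omega>) - max 1 (Y \<omega>)) / (t - 1)" for t \<omega>
  have eq: "(D_norm M X t (\<lambda>i. 1 / x i) - D_norm M X 1 (\<lambda>i. 1 / x i)) / (t - 1)
      = integral\<^sup>L M (g t)" if "t > 1" for t
  proof -
    have "D_norm M X t (\<lambda>i. 1 / x i) - D_norm M X 1 (\<lambda>i. 1 / x i)
        = integral\<^sup>L M (\<lambda>\<omega>. max t (Y \<omega>) - max 1 (Y \<omega>))"
      unfolding D_norm_def Y_def[symmetric] using that
      using Bochner_Integration.integral_diff[OF Mint[of t] Mint[of 1]] by simp
    then show ?thesis unfolding g_def by simp
  qed
  show ?thesis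
  proof (rule tendsto_at_right_sequentially[where b=2])
    fix S :: "nat \<Rightarrow> real"
    assume S1: "\<And>n. 1 < S n" and S2: "\<And>n. S n < 2" and "decseq S" and Slim: "S \<longlonglongrightarrow> 1"
    have "(\<lambda>n. integral\<^sup>L M (g (S n))) \<longlonglongrightarrow> integral\<^sup>L M (indicator A :: 'a \<Rightarrow> real)"
    proof (rule integral_dominated_convergence[where w="\<lambda>_. 1"])
      show "indicator A \<in> borel_measurable M" by measurable
      show "g (S n) \<in> borel_measurable M" for n unfolding g_def by measurable
      show "integrable M (\<lambda>_. 1::real)" by simp
      show "AE \<omega> in M. norm (g (S n) \<omega>) \<le> 1" for n
        unfolding g_def using max_diff_bound[OF S1] by simp
      show "AE \<omega> in M. (\<lambda>n. g (S n) \<omega>) \<longlonglongrightarrow> indicator A \<omega>"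
      proof (rule AE_I2)
        fix \<omega> assume om: "\<omega> \<in> space M"
        show "(\<lambda>n. g (S n) \<omega>) \<longlonglongrightarrow> indicator A \<omega>"
        proof (cases "Y \<omega> \<le> 1")
          case True
          then have "\<omega> \<in> A" using YA om unfolding A_def by auto
          moreover have "g (S n) \<omega> = 1" for n
            using True S1[of n] unfolding g_def by simp
          ultimately show ?thesis by simp
        next
          case False
          then have "\<omega> \<notin> A" using YA om unfolding A_def by auto
          moreover have "eventually (\<lambda>n. S n < Y \<omega>) sequentially"
            using order_tendstoD(2)[OF Slim] False by simp
          then have "eventually (\<lambda>n. g (S n) \<omega> = 0) sequentially"
            by eventually_elim (use False in \<open>auto simp: g_def\<close>)
          ultimately show ?thesis by (simp add: tendsto_eventually)
        qed
      qed
    qed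
    moreover have "integral\<^sup>L M (indicator A :: 'a \<Rightarrow> real) = distr_fun M X x"
      unfolding distr_fun_def A_def[symmetric] by simp
    ultimately show "(\<lambda>n. (D_norm M X (S n) (\<lambda>i. 1 / x i) - D_norm M X 1 (\<lambda>i. 1 / x i)) / (S n - 1))
        \<longlonglongrightarrow> distr_fun M X x"
      using eq[OF S1] by simp
  qed simp
qed

end
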